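(* Let $\mathbf v\in\mathbb R_{<0}^{n\times m}$. There is a bijection $f\leftrightarrow G_f$ between the faces of the Pareto frontier of $\mathcal U(\mathbf v)$ and the set $\mathrm{MWW}(\mathbf v)$ such that, for every face $f$, an allocation $\mathbf z$ satisfies $\mathbf u(\mathbf z)\in f$ if and only if $G_{\mathbf z}$ is a subgraph of $G_f$.
   Context: Setup: agents $[n]$, chores $[m]$, allocations $\mathbf z\in\mathbb R^{n\times m}_{\ge0}$ with column sums $1$, $u_i(\mathbf z_i)=\sum_jv_{i,j}z_{i,j}$. $\mathcal U(\mathbf v)=\{\mathbf u(\mathbf z):\mathbf z\text{ allocation}\}\subset\mathbb R^n$ (a convex polytope). A face of the Pareto frontier is a set of the form $\arg\max_{\mathbf u\in\mathcal U(\mathbf v)}\langle\tau,\mathbf u\rangle$ for some $\tau\in\mathbb R^n_{>0}$. The consumption graph $G_{\mathbf z}$ has edge $(i,j)$ iff $z_{i,j}>0$. For $\tau\in\mathbb R^n_{>0}$, $G_\tau(\mathbf v)$ is the bipartite graph on $([n],[m])$ with edge $(i,j)$ iff $\tau_i|v_{i,j}|\le\tau_{i'}|v_{i',j}|$ for all $i'$; $\mathrm{MWW}(\mathbf v)=\{G_\tau(\mathbf v):\tau\in\mathbb R^n_{>0}\}$. *)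

theory Defs
  imports Complex_Main
begin

text \<open>Agents are the elements of a finite type 'n, chores the elements of a finite type 'm.
  Valuations v i j, allocations z i j (fraction of chore j given to agent i).\<close>

definition is_allocation :: "('n::finite \<Rightarrow> 'm::finite \<Rightarrow> real) \<Rightarrow> bool" where
  "is_allocation z \<longleftrightarrow> (\<forall>i j. z i j \<ge> 0) \<and> (\<forall>j. (\<Sum>i\<in>UNIV. z i j) = 1)"

definition util :: "('n::finite \<Rightarrow> 'm::finite \<Rightarrow> real) \<Rightarrow> ('n \<Rightarrow> 'm \<Rightarrow> real) \<Rightarrow> ('n \<Rightarrow> real)" where
  "util v z = (\<lambda>i. \<Sum>j\<in>UNIV. v i j * z i j)"

definition util_set :: "('n::finite \<Rightarrow> 'm::finite \<Rightarrow> real) \<Rightarrow> ('n \<Rightarrow> real) set" where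
  "util_set v = {util v z | z. is_allocation z}"

definition pareto_faces :: "('n::finite \<Rightarrow> 'm::finite \<Rightarrow> real) \<Rightarrow> ('n \<Rightarrow> real) set set" where
  "pareto_faces v = {{x \<in> util_set v. \<forall>y \<in> util_set v. (\<Sum>i\<in>UNIV. \<tau> i * y i) \<le> (\<Sum>i\<in>UNIV. \<tau> i * x i)}
                     | \<tau>. \<forall>i. \<tau> i > 0}"

definition consumption_graph :: "('n::finite \<Rightarrow> 'm::finite \<Rightarrow> real) \<Rightarrow> ('n \<times> 'm) set" where
  "consumption_graph z = {(i, j). z i j > 0}"

definition G_tau :: "('n::finite \<Rightarrow> real) \<Rightarrow> ('n \<Rightarrow> 'm::finite \<Rightarrow> real) \<Rightarrow> ('n \<times> 'm) set" where
  "G_tau \<tau> v = {(i, j). \<forall>i'. \<tau> i * \<bar>v i j\<bar> \<le> \<tau> i' * \<bar>v i' j\<bar>}"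

definition MWW :: "('n::finite \<Rightarrow> 'm::finite \<Rightarrow> real) \<Rightarrow> ('n \<times> 'm) set set" where
  "MWW v = {G_tau \<tau> v | \<tau>. \<forall>i. \<tau> i > 0}"

end

theory Submission
  imports Defs
begin

definition wt :: "('n::finite \<Rightarrow> real) \<Rightarrow> ('n \<Rightarrow> 'm::finite \<Rightarrow> real) \<Rightarrow> 'n \<Rightarrow> 'm \<Rightarrow> real" where
  "wt \<tau> v i j = \<tau> i * \<bar>v i j\<bar>"

definition cmin :: "('n::finite \<Rightarrow> real) \<Rightarrow> ('n \<Rightarrow> 'm::finite \<Rightarrow> real) \<Rightarrow> 'm \<Rightarrow> real" where
  "cmin \<tau> v j = Min (range (\<lambda>i. wt \<tau> v i j))"

lemma cmin_le: "cmin \<tau> v j \<le> wt \<tau> v i j"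
  unfolding cmin_def by (rule Min_le) auto

lemma cmin_ex: "\<exists>i. wt \<tau> v i j = cmin \<tau> v j"
proof -
  have "cmin \<tau> v j \<in> range (\<lambda>i. wt \<tau> v i j)"
    unfolding cmin_def by (rule Min_in) auto
  then show ?thesis by auto
qed

lemma G_iff: "(i, j) \<in> G_tau \<tau> v \<longleftrightarrow> wt \<tau> v i j = cmin \<tau> v j"
proof
  assume "(i, j) \<in> G_tau \<tau> v"
  then have h: "\<forall>i'. wt \<tau> v i j \<le> wt \<tau> v i' j" by (simp add: G_tau_def wt_def)
  obtain i0 where "wt \<tau> v i0 j = cmin \<tau> v j" using cmin_ex by blast
  then show "wt \<tau> v i j = cmin \<tau> v j" using h cmin_le[of \<tau> v j i] by (metis order_antisym)
next
  assume "wt \<tau> v i j = cmin \<tau> v j"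
  then have "\<forall>i'. wt \<tau> v i j \<le> wt \<tau> v i' j" using cmin_le by metis
  then show "(i, j) \<in> G_tau \<tau> v" by (simp add: G_tau_def wt_def)
qed

lemma obj_eq:
  assumes v: "\<forall>i j. v i j < 0" and z: "is_allocation z"
  shows "(\<Sum>i\<in>UNIV. \<tau> i * util v z i) =
     - (\<Sum>j\<in>UNIV. cmin \<tau> v j) - (\<Sum>j\<in>UNIV. \<Sum>i\<in>UNIV. (wt \<tau> v i j - cmin \<tau> v j) * z i j)"
proof -
  have "(\<Sum>i\<in>UNIV. \<tau> i * util v z i) = (\<Sum>i\<in>UNIV. \<Sum>j\<in>UNIV. - (wt \<tau> v i j * z i j))"
    unfolding util_def sum_distrib_left
    apply (rule sum.cong, simp, rule sum.cong, simp)
    using v by (auto simp: wt_def abs_if)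
  also have "\<dots> = (\<Sum>j\<in>UNIV. \<Sum>i\<in>UNIV. - (wt \<tau> v i j * z i j))"
    by (rule sum.swap)
  also have "\<dots> = (\<Sum>j\<in>UNIV. - cmin \<tau> v j - (\<Sum>i\<in>UNIV. (wt \<tau> v i j - cmin \<tau> v j) * z i j))"
  proof (rule sum.cong, simp)
    fix j
    have s: "(\<Sum>i\<in>UNIV. z i j) = 1" using z by (simp add: is_allocation_def)
    have "(\<Sum>i\<in>UNIV. (wt \<tau> v i j - cmin \<tau> v j) * z i j)
        = (\<Sum>i\<in>UNIV. wt \<tau> v i j * z i j) - cmin \<tau> v j * (\<Sum>i\<in>UNIV. z i j)"
      by (simp add: left_diff_distrib sum_subtractf sum_distrib_left)
    then show "(\<Sum>i\<in>UNIV. - (wt \<tau> v i j * z i j)) =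
        - cmin \<tau> v j - (\<Sum>i\<in>UNIV. (wt \<tau> v i j - cmin \<tau> v j) * z i j)"
      using s by (simp add: sum_negf)
  qed
  also have "\<dots> = - (\<Sum>j\<in>UNIV. cmin \<tau> v j) - (\<Sum>j\<in>UNIV. \<Sum>i\<in>UNIV. (wt \<tau> v i j - cmin \<tau> v j) * z i j)"
    by (simp add: sum_subtractf sum_negf)
  finally show ?thesis .
qed

lemma dsum_nonneg:
  assumes z: "is_allocation z"
  shows "0 \<le> (\<Sum>j\<in>UNIV. \<Sum>i\<in>UNIV. (wt \<tau> v i j - cmin \<tau> v j) * z i j)"
  using z cmin_le by (auto simp: is_allocation_def intro!: sum_nonneg mult_nonneg_nonneg)

definition pm :: "('m \<Rightarrow> 'n) \<Rightarrow> 'n::finite \<Rightarrow> 'm::finite \<Rightarrow> real" where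
  "pm a = (\<lambda>i j. if i = a j then 1 else 0)"

lemma pm_alloc: "is_allocation (pm a)"
  unfolding is_allocation_def pm_def by auto

lemma pm_cg: "consumption_graph (pm a) = {(i, j). i = a j}"
  unfolding consumption_graph_def pm_def by auto

lemma face_iff:
  assumes v: "\<forall>i j. v i j < 0" and z: "is_allocation z"
  shows "(\<forall>y\<in>util_set v. (\<Sum>i\<in>UNIV. \<tau> i * y i) \<le> (\<Sum>i\<in>UNIV. \<tau> i * util v z i))
     \<longleftrightarrow> consumption_graph z \<subseteq> G_tau \<tau> v"
proof
  assume h: "\<forall>y\<in>util_set v. (\<Sum>i\<in>UNIV. \<tau> i * y i) \<le> (\<Sum>i\<in>UNIV. \<tau> i * util v z i)"
  define a where "a j = (SOME i. wt \<tau> v i j = cmin \<tau> v j)" for j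
  have a: "wt \<tau> v (a j) j = cmin \<tau> v j" for j
    unfolding a_def by (rule someI_ex, rule cmin_ex)
  have "util v (pm a) \<in> util_set v" using pm_alloc unfolding util_set_def by blast
  then have le: "(\<Sum>i\<in>UNIV. \<tau> i * util v (pm a) i) \<le> (\<Sum>i\<in>UNIV. \<tau> i * util v z i)" using h by blast
  have zero: "(\<Sum>j\<in>UNIV. \<Sum>i\<in>UNIV. (wt \<tau> v i j - cmin \<tau> v j) * pm a i j) = 0"
  proof (rule sum.neutral, rule ballI)
    fix j show "(\<Sum>i\<in>UNIV. (wt \<tau> v i j - cmin \<tau> v j) * pm a i j) = 0"
      by (rule sum.neutral) (auto simp: pm_def a)
  qed
  have "(\<Sum>j\<in>UNIV. \<Sum>i\<in>UNIV. (wt \<tau> v i j - cmin \<tau> v j) * z i j) \<le> 0"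
    using le obj_eq[OF v z, of \<tau>] obj_eq[OF v pm_alloc, of \<tau> a] zero by linarith
  then have S: "(\<Sum>j\<in>UNIV. \<Sum>i\<in>UNIV. (wt \<tau> v i j - cmin \<tau> v j) * z i j) = 0"
    using dsum_nonneg[OF z, of \<tau> v] by linarith
  have nn: "0 \<le> (wt \<tau> v i j - cmin \<tau> v j) * z i j" for i j
    using z cmin_le by (auto simp: is_allocation_def intro!: mult_nonneg_nonneg)
  have nn2: "0 \<le> (\<Sum>i\<in>UNIV. (wt \<tau> v i j - cmin \<tau> v j) * z i j)" for j
    using nn by (simp add: sum_nonneg)
  have "(\<Sum>i\<in>UNIV. (wt \<tau> v i j - cmin \<tau> v j) * z i j) = 0" for j
    using S nn2 by (simp add: sum_nonneg_eq_0_iff)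
  then have t0: "(wt \<tau> v i j - cmin \<tau> v j) * z i j = 0" for i j
    using nn by (simp add: sum_nonneg_eq_0_iff)
  show "consumption_graph z \<subseteq> G_tau \<tau> v"
  proof
    fix p assume "p \<in> consumption_graph z"
    then obtain i j where p: "p = (i, j)" and "z i j > 0" by (auto simp: consumption_graph_def)
    then have "wt \<tau> v i j = cmin \<tau> v j" using t0[of i j] by simp
    then show "p \<in> G_tau \<tau> v" using p G_iff by blast
  qed
next
  assume g: "consumption_graph z \<subseteq> G_tau \<tau> v"
  have "(wt \<tau> v i j - cmin \<tau> v j) * z i j = 0" for i j
  proof (cases "z i j > 0")
    case True
    then have "(i, j) \<in> G_tau \<tau> v" using g by (auto simp: consumption_graph_def)
    then show ?thesis using G_iff[of i j \<tau> v] by simp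
  next
    case False
    then have "z i j = 0" using z by (auto simp: is_allocation_def intro: order_antisym)
    then show ?thesis by simp
  qed
  then have zero: "(\<Sum>j\<in>UNIV. \<Sum>i\<in>UNIV. (wt \<tau> v i j - cmin \<tau> v j) * z i j) = 0"
    by (intro sum.neutral ballI) simp
  show "\<forall>y\<in>util_set v. (\<Sum>i\<in>UNIV. \<tau> i * y i) \<le> (\<Sum>i\<in>UNIV. \<tau> i * util v z i)"
  proof
    fix y assume "y \<in> util_set v"
    then obtain w where y: "y = util v w" and w: "is_allocation w" by (auto simp: util_set_def)
    show "(\<Sum>i\<in>UNIV. \<tau> i * y i) \<le> (\<Sum>i\<in>UNIV. \<tau> i * util v z i)"
      unfolding y using obj_eq[OF v z, of \<tau>] obj_eq[OF v w, of \<tau>] zero dsum_nonneg[OF w, of \<tau> v]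
      by linarith
  qed
qed

definition face :: "('n::finite \<Rightarrow> 'm::finite \<Rightarrow> real) \<Rightarrow> ('n \<Rightarrow> real) \<Rightarrow> ('n \<Rightarrow> real) set" where
  "face v \<tau> = {x \<in> util_set v. \<forall>y \<in> util_set v. (\<Sum>i\<in>UNIV. \<tau> i * y i) \<le> (\<Sum>i\<in>UNIV. \<tau> i * x i)}"

lemma face_mem:
  assumes v: "\<forall>i j. v i j < 0" and z: "is_allocation z"
  shows "util v z \<in> face v \<tau> \<longleftrightarrow> consumption_graph z \<subseteq> G_tau \<tau> v"
proof -
  have "util v z \<in> util_set v" using z unfolding util_set_def by blast
  then show ?thesis unfolding face_def using face_iff[OF v z] by simp
qed

lemma face_G:
  assumes v: "\<forall>i j. v i j < 0" and eq: "face v \<tau> = face v \<sigma>"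
  shows "G_tau \<tau> v \<subseteq> G_tau \<sigma> v"
proof
  fix p assume p: "p \<in> G_tau \<tau> v"
  obtain i j where pij: "p = (i, j)" by (cases p)
  define a0 where "a0 j' = (SOME i. wt \<tau> v i j' = cmin \<tau> v j')" for j'
  have a0: "wt \<tau> v (a0 j') j' = cmin \<tau> v j'" for j'
    unfolding a0_def by (rule someI_ex, rule cmin_ex)
  define a where "a = a0(j := i)"
  have "consumption_graph (pm a) \<subseteq> G_tau \<tau> v"
  proof
    fix q assume "q \<in> consumption_graph (pm a)"
    then obtain i' j' where q: "q = (i', j')" "i' = a j'" unfolding pm_cg by blast
    show "q \<in> G_tau \<tau> v"
    proof (cases "j' = j")
      case True then show ?thesis using q p pij by (simp add: a_def)
    next
      case False then show ?thesis using q G_iff[of "a0 j'" j' \<tau> v] a0[of j'] by (simp add: a_def)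
    qed
  qed
  then have "util v (pm a) \<in> face v \<sigma>" using face_mem[OF v pm_alloc] eq by metis
  then have "consumption_graph (pm a) \<subseteq> G_tau \<sigma> v" using face_mem[OF v pm_alloc] by metis
  then show "p \<in> G_tau \<sigma> v" unfolding pm_cg using pij by (auto simp: a_def)
qed

lemma G_face:
  assumes v: "\<forall>i j. v i j < 0" and eq: "G_tau \<tau> v = G_tau \<sigma> v"
  shows "face v \<tau> = face v \<sigma>"
proof -
  have "x \<in> face v \<sigma>" if "x \<in> face v \<tau>" "G_tau \<tau> v = G_tau \<sigma> v" for x \<tau> \<sigma>
  proof -
    have "x \<in> util_set v" using that unfolding face_def by blast
    then obtain z where z: "is_allocation z" and x: "x = util v z" unfolding util_set_def by blast
    show ?thesis using that face_mem[OF v z] x by metis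
  qed
  then show ?thesis using eq by blast
qed

theorem lemma1:
  fixes v :: "'n::finite \<Rightarrow> 'm::finite \<Rightarrow> real"
  assumes "\<forall>i j. v i j < 0"
  shows "\<exists>g. bij_betw g (pareto_faces v) (MWW v) \<and>
    (\<forall>f \<in> pareto_faces v. \<forall>z. is_allocation z \<longrightarrow>
        (util v z \<in> f \<longleftrightarrow> consumption_graph z \<subseteq> g f))"
proof -
  have PF: "pareto_faces v = {face v \<tau> | \<tau>. \<forall>i. \<tau> i > 0}"
    unfolding pareto_faces_def face_def by simp
  define tf where "tf f = (SOME \<tau>. (\<forall>i. \<tau> i > 0) \<and> f = face v \<tau>)" for f
  define g where "g f = G_tau (tf f) v" for f
  have tf: "(\<forall>i. tf f i > 0) \<and> f = face v (tf f)" if "f \<in> pareto_faces v" for f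
  proof -
    have "\<exists>\<tau>. (\<forall>i. \<tau> i > 0) \<and> f = face v \<tau>" using that unfolding PF by blast
    then show ?thesis unfolding tf_def by (rule someI_ex)
  qed
  have gf: "g (face v \<tau>) = G_tau \<tau> v" if "\<forall>i. \<tau> i > 0" for \<tau>
  proof -
    have "face v \<tau> \<in> pareto_faces v" using that PF by blast
    then have e: "face v \<tau> = face v (tf (face v \<tau>))" using tf by blast
    show ?thesis unfolding g_def using face_G[OF assms e] face_G[OF assms e[symmetric]] by blast
  qed
  have bij: "bij_betw g (pareto_faces v) (MWW v)"
  proof (rule bij_betwI')
    fix x y assume "x \<in> pareto_faces v" "y \<in> pareto_faces v"
    then obtain \<tau> \<sigma> where "\<forall>i. \<tau> i > 0" "x = face v \<tau>" "\<forall>i. \<sigma> i > 0" "y = face v \<sigma>"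
      unfolding PF by blast
    then show "(g x = g y) = (x = y)" using gf G_face[OF assms] by metis
  next
    fix x assume "x \<in> pareto_faces v"
    then obtain \<tau> where "\<forall>i. \<tau> i > 0" "x = face v \<tau>" unfolding PF by blast
    then show "g x \<in> MWW v" using gf unfolding MWW_def by blast
  next
    fix y assume "y \<in> MWW v"
    then obtain \<tau> where "\<forall>i. \<tau> i > 0" "y = G_tau \<tau> v" unfolding MWW_def by blast
    then show "\<exists>x\<in>pareto_faces v. y = g x" using gf PF by blast
  qed
  moreover have "\<forall>f \<in> pareto_faces v. \<forall>z. is_allocation z \<longrightarrow>
        (util v z \<in> f \<longleftrightarrow> consumption_graph z \<subseteq> g f)"
  proof (intro ballI allI impI)
    fix f and z :: "'n \<Rightarrow> 'm \<Rightarrow> real" assume f: "f \<in> pareto_faces v" and z: "is_allocation z"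
    then obtain \<tau> where t: "\<forall>i. \<tau> i > 0" "f = face v \<tau>" unfolding PF by blast
    show "util v z \<in> f \<longleftrightarrow> consumption_graph z \<subseteq> g f"
      using face_mem[OF assms z, of \<tau>] gf[OF t(1)] t(2) by simp
  qed
  ultimately show ?thesis by blast
qed

end
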